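(* Let $(G_n)_{n\in\mathbb{N}}$ be an $\mathrm{FO}$-convergent sequence of finite graphs with modeling limit $L$, and let $\xi(x)$ be a formula in the language of graphs with one free variable such that $\xi(L)$ is finite and nonempty, $\xi(L)$ contains no nonempty proper subset of the form $\chi(L)$ for a formula $\chi(x)$ in the language of graphs, and $|\xi(G_n)|=|\xi(L)|$ for every $n$. Let $\phi_1,\phi_2,\dots$ be an enumeration of all first-order formulas in the language of rooted graphs. Then there exist, for each $i\in\mathbb{N}$, a sequence $(r^i_n)_{n\in\mathbb{N}}$ with $r^i_n\in\xi(G_n)$ and a vertex $r^i\in\xi(L)$ such that for all $j\le i$ we have $\lim_{n\to\infty}\langle\phi_j,(G_n,r^i_n)\rangle=\langle\phi_j,(L,r^i)\rangle$, and moreover $\langle\phi_j,(L,r^i)\rangle=\langle\phi_j,(L,r^{i'})\rangle$ for every $i'\ge i$.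
   Context: Graphs are first-order structures in the language with one binary (edge) relation. For a formula $\phi$ with $p$ free variables and a structure $G$, $\phi(G)=\{\mathbf{v}\in V(G)^p : G\models\phi(\mathbf{v})\}$. The Stone pairing of $\phi$ ($p\ge1$) with a finite graph $G$ is $\langle\phi,G\rangle=|\phi(G)|/|V(G)|^p$; for sentences it is $1$ if $G\models\phi$ and $0$ otherwise. A sequence of finite graphs is $\mathrm{FO}$-convergent if $(\langle\phi,G_n\rangle)$ converges for every formula $\phi$. A modeling is a graph $L$ whose vertex set is a standard Borel space with a probability measure $\nu$ such that every first-order definable set $\phi(L)\subseteq V(L)^p$ is measurable; $\langle\phi,L\rangle=\nu^{\otimes p}(\phi(L))$ (and $1$/$0$ for sentences). $L$ is a modeling limit of $(G_n)$ if $\lim_n\langle\phi,G_n\rangle=\langle\phi,L\rangle$ for all $\phi$. The language of rooted graphs adds a constant symbol $\mathrm{Root}$; $(G,r)$ is $G$ with $\mathrm{Root}$ interpreted as $r$, and Stone pairings with rooted structures are defined in the same way. *)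

theory Defs
  imports "HOL-Probability.Probability"
begin

datatype gterm = Var nat | Root

datatype fm = Eq gterm gterm | Adj gterm gterm | Neg fm | Conj fm fm | Exists nat fm

fun tvars :: "gterm \<Rightarrow> nat set" where
  "tvars (Var i) = {i}"
| "tvars Root = {}"

fun fv :: "fm \<Rightarrow> nat set" where
  "fv (Eq s t) = tvars s \<union> tvars t"
| "fv (Adj s t) = tvars s \<union> tvars t"
| "fv (Neg f) = fv f"
| "fv (Conj f g) = fv f \<union> fv g"
| "fv (Exists x f) = fv f - {x}"

fun troot :: "gterm \<Rightarrow> bool" where
  "troot (Var i) = False"
| "troot Root = True"

text \<open>A formula of the language of graphs = a formula not using the constant Root.\<close>
fun graph_fm :: "fm \<Rightarrow> bool" where
  "graph_fm (Eq s t) = (\<not> troot s \<and> \<not> troot t)"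
| "graph_fm (Adj s t) = (\<not> troot s \<and> \<not> troot t)"
| "graph_fm (Neg f) = graph_fm f"
| "graph_fm (Conj f g) = (graph_fm f \<and> graph_fm g)"
| "graph_fm (Exists x f) = graph_fm f"

fun tval :: "'v \<Rightarrow> (nat \<Rightarrow> 'v) \<Rightarrow> gterm \<Rightarrow> 'v" where
  "tval r a (Var i) = a i"
| "tval r a Root = r"

fun sat :: "'v set \<Rightarrow> ('v \<Rightarrow> 'v \<Rightarrow> bool) \<Rightarrow> 'v \<Rightarrow> (nat \<Rightarrow> 'v) \<Rightarrow> fm \<Rightarrow> bool" where
  "sat V E r a (Eq s t) = (tval r a s = tval r a t)"
| "sat V E r a (Adj s t) = E (tval r a s) (tval r a t)"
| "sat V E r a (Neg f) = (\<not> sat V E r a f)"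
| "sat V E r a (Conj f g) = (sat V E r a f \<and> sat V E r a g)"
| "sat V E r a (Exists x f) = (\<exists>v\<in>V. sat V E r (a(x := v)) f)"

text \<open>phi(G): tuples indexed by the free variables of phi (an element of V^p, p = |fv phi|).\<close>
definition def_tuples :: "'v set \<Rightarrow> ('v \<Rightarrow> 'v \<Rightarrow> bool) \<Rightarrow> 'v \<Rightarrow> fm \<Rightarrow> (nat \<Rightarrow> 'v) set" where
  "def_tuples V E r f = {a \<in> fv f \<rightarrow>\<^sub>E V. sat V E r a f}"

definition stone :: "'v set \<Rightarrow> ('v \<Rightarrow> 'v \<Rightarrow> bool) \<Rightarrow> 'v \<Rightarrow> fm \<Rightarrow> real" where
  "stone V E r f =
     (if fv f = {} then (if sat V E r (\<lambda>_. undefined) f then 1 else 0)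
      else real (card (def_tuples V E r f)) / real (card V) ^ card (fv f))"

definition stone_mod :: "'v measure \<Rightarrow> ('v \<Rightarrow> 'v \<Rightarrow> bool) \<Rightarrow> 'v \<Rightarrow> fm \<Rightarrow> real" where
  "stone_mod M E r f =
     (if fv f = {} then (if sat (space M) E r (\<lambda>_. undefined) f then 1 else 0)
      else measure (PiM (fv f) (\<lambda>_. M)) (def_tuples (space M) E r f))"

text \<open>A modeling: vertex set is a standard Borel space (here: the Borel space of a Polish
  space, given as a type), carrying a probability measure, such that every first-order
  definable set (in the language of graphs) is measurable in the product sigma-algebra.\<close>
definition modeling :: "('v::polish_space) measure \<Rightarrow> ('v \<Rightarrow> 'v \<Rightarrow> bool) \<Rightarrow> bool" where
  "modeling M E \<longleftrightarrow> prob_space M \<and> sets M = sets borel \<and>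
     (\<forall>f r. graph_fm f \<longrightarrow> def_tuples (space M) E r f \<in> sets (PiM (fv f) (\<lambda>_. M)))"

definition def_set :: "'v set \<Rightarrow> ('v \<Rightarrow> 'v \<Rightarrow> bool) \<Rightarrow> fm \<Rightarrow> 'v set" where
  "def_set V E f = {v \<in> V. sat V E undefined (\<lambda>_. v) f}"

definition FO_convergent :: "(nat \<Rightarrow> 'a set) \<Rightarrow> (nat \<Rightarrow> 'a \<Rightarrow> 'a \<Rightarrow> bool) \<Rightarrow> bool" where
  "FO_convergent V E \<longleftrightarrow> (\<forall>f. graph_fm f \<longrightarrow> convergent (\<lambda>n. stone (V n) (E n) undefined f))"

definition modeling_limit ::
  "(nat \<Rightarrow> 'a set) \<Rightarrow> (nat \<Rightarrow> 'a \<Rightarrow> 'a \<Rightarrow> bool) \<Rightarrow> ('v::polish_space) measure \<Rightarrow> ('v \<Rightarrow> 'v \<Rightarrow> bool) \<Rightarrow> bool" where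
  "modeling_limit V E M F \<longleftrightarrow> modeling M F \<and>
     (\<forall>f. graph_fm f \<longrightarrow> (\<lambda>n. stone (V n) (E n) undefined f) \<longlonglongrightarrow> stone_mod M F undefined f)"

end

theory Submission
  imports Defs
begin


definition TT :: fm where "TT = Neg (Exists 0 (Neg (Eq (Var 0) (Var 0))))"

lemma sat_TT[simp]: "sat V E r a TT" by (simp add: TT_def)
lemma fv_TT[simp]: "fv TT = {}" by (simp add: TT_def)
lemma graph_TT[simp]: "graph_fm TT" by (simp add: TT_def)

lemma finite_tvars[simp]: "finite (tvars t)" by (cases t) auto
lemma finite_fv[simp]: "finite (fv f)" by (induction f) auto

lemma tval_cong: "(\<And>x. x \<in> tvars t \<Longrightarrow> a x = a' x) \<Longrightarrow> tval r a t = tval r a' t"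
  by (cases t) auto

lemma sat_cong: "(\<And>x. x \<in> fv f \<Longrightarrow> a x = a' x) \<Longrightarrow> sat V E r a f = sat V E r a' f"
proof (induction f arbitrary: a a')
  case (Eq s t)
  have "tval r a s = tval r a' s" by (rule tval_cong) (use Eq.prems in simp)
  moreover have "tval r a t = tval r a' t" by (rule tval_cong) (use Eq.prems in simp)
  ultimately show ?case by simp
next
  case (Adj s t)
  have "tval r a s = tval r a' s" by (rule tval_cong) (use Adj.prems in simp)
  moreover have "tval r a t = tval r a' t" by (rule tval_cong) (use Adj.prems in simp)
  ultimately show ?case by simp
next
  case (Neg f)
  have "sat V E r a f = sat V E r a' f" by (rule Neg.IH) (use Neg.prems in simp)
  then show ?case by simp
next
  case (Conj f g)
  have "sat V E r a f = sat V E r a' f" by (rule Conj.IH(1)) (use Conj.prems in simp)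
  moreover have "sat V E r a g = sat V E r a' g" by (rule Conj.IH(2)) (use Conj.prems in simp)
  ultimately show ?case by simp
next
  case (Exists x f)
  have "\<And>v. sat V E r (a(x:=v)) f = sat V E r (a'(x:=v)) f"
    by (rule Exists.IH) (use Exists.prems in auto)
  then show ?case by simp
qed

lemma tval_root: "\<not> troot t \<Longrightarrow> tval r a t = tval r' a t" by (cases t) auto

lemma sat_graph_root: "graph_fm f \<Longrightarrow> sat V E r a f = sat V E r' a f"
proof (induction f arbitrary: a)
  case (Eq s t) then show ?case using tval_root[of s r a r'] tval_root[of t r a r'] by auto
next
  case (Adj s t) then show ?case using tval_root[of s r a r'] tval_root[of t r a r'] by auto
qed auto

lemma def_tuples_graph_root: "graph_fm f \<Longrightarrow> def_tuples V E r f = def_tuples V E r' f"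
  unfolding def_tuples_def using sat_graph_root[of f V E r _ r'] by simp

lemma stone_graph_root: "graph_fm f \<Longrightarrow> stone V E r f = stone V E r' f"
  unfolding stone_def using sat_graph_root[of f V E r _ r'] def_tuples_graph_root[of f V E r r'] by simp

lemma stone_alt: "stone V E r f = real (card (def_tuples V E r f)) / real (card V) ^ card (fv f)"
proof (cases "fv f = {}")
  case True
  have "sat V E r a f = sat V E r (\<lambda>_. undefined) f" for a by (rule sat_cong) (use True in auto)
  then have "def_tuples V E r f = (if sat V E r (\<lambda>_. undefined) f then {\<lambda>_. undefined} else {})"
    unfolding def_tuples_def using True by auto
  then show ?thesis using True by (simp add: stone_def)
qed (simp add: stone_def)

lemma stone_mod_alt: "stone_mod M F r f = measure (PiM (fv f) (\<lambda>_. M)) (def_tuples (space M) F r f)"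
proof (cases "fv f = {}")
  case True
  have "sat (space M) F r a f = sat (space M) F r (\<lambda>_. undefined) f" for a by (rule sat_cong) (use True in auto)
  then have "def_tuples (space M) F r f = (if sat (space M) F r (\<lambda>_. undefined) f then {\<lambda>_. undefined} else {})"
    unfolding def_tuples_def using True by auto
  then show ?thesis using True by (simp add: stone_mod_def PiM_empty)
qed (simp add: stone_mod_def)

section \<open>Renaming\<close>

fun rt :: "(nat \<Rightarrow> nat) \<Rightarrow> gterm \<Rightarrow> gterm" where
  "rt \<sigma> (Var i) = Var (\<sigma> i)" | "rt \<sigma> Root = Root"

fun ren :: "(nat \<Rightarrow> nat) \<Rightarrow> fm \<Rightarrow> fm" where
  "ren \<sigma> (Eq s t) = Eq (rt \<sigma> s) (rt \<sigma> t)"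
| "ren \<sigma> (Adj s t) = Adj (rt \<sigma> s) (rt \<sigma> t)"
| "ren \<sigma> (Neg f) = Neg (ren \<sigma> f)"
| "ren \<sigma> (Conj f g) = Conj (ren \<sigma> f) (ren \<sigma> g)"
| "ren \<sigma> (Exists x f) = Exists (\<sigma> x) (ren \<sigma> f)"

lemma tval_rt: "tval r a (rt \<sigma> t) = tval r (a \<circ> \<sigma>) t" by (cases t) auto
lemma tvars_rt: "tvars (rt \<sigma> t) = \<sigma> ` tvars t" by (cases t) auto
lemma troot_rt: "troot (rt \<sigma> t) = troot t" by (cases t) auto

lemma sat_ren: "inj \<sigma> \<Longrightarrow> sat V E r a (ren \<sigma> f) = sat V E r (a \<circ> \<sigma>) f"
proof (induction f arbitrary: a)
  case (Exists x f)
  have "(a(\<sigma> x := v)) \<circ> \<sigma> = (a \<circ> \<sigma>)(x := v)" for v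
    using Exists.prems unfolding inj_def by (auto simp: fun_eq_iff)
  note * = this
  have "sat V E r a (ren \<sigma> (Exists x f)) = (\<exists>v\<in>V. sat V E r (a(\<sigma> x := v)) (ren \<sigma> f))" by simp
  also have "\<dots> = (\<exists>v\<in>V. sat V E r ((a(\<sigma> x := v)) \<circ> \<sigma>) f)"
  proof -
    have "sat V E r (a(\<sigma> x := v)) (ren \<sigma> f) = sat V E r ((a(\<sigma> x := v)) \<circ> \<sigma>) f" for v
      by (rule Exists.IH[OF Exists.prems])
    then show ?thesis by (simp only: )
  qed
  also have "\<dots> = (\<exists>v\<in>V. sat V E r ((a \<circ> \<sigma>)(x := v)) f)" by (simp only: *)
  finally show ?case by (simp only: sat.simps ren.simps)
qed (auto simp: tval_rt)

lemma fv_ren: "inj \<sigma> \<Longrightarrow> fv (ren \<sigma> f) = \<sigma> ` fv f"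
proof (induction f)
  case (Exists x f)
  then show ?case by (simp add: image_set_diff)
qed (auto simp: tvars_rt image_Un)

lemma graph_ren: "graph_fm (ren \<sigma> f) = graph_fm f"
  by (induction f) (auto simp: troot_rt)



fun vars :: "fm \<Rightarrow> nat set" where
  "vars (Eq s t) = tvars s \<union> tvars t"
| "vars (Adj s t) = tvars s \<union> tvars t"
| "vars (Neg f) = vars f"
| "vars (Conj f g) = vars f \<union> vars g"
| "vars (Exists x f) = insert x (vars f)"

lemma finite_vars[simp]: "finite (vars f)" by (induction f) auto
lemma fv_vars: "fv f \<subseteq> vars f" by (induction f) auto

fun rst :: "nat \<Rightarrow> gterm \<Rightarrow> gterm" where
  "rst z (Var i) = Var i" | "rst z Root = Var z"

fun rsub :: "nat \<Rightarrow> fm \<Rightarrow> fm" where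
  "rsub z (Eq s t) = Eq (rst z s) (rst z t)"
| "rsub z (Adj s t) = Adj (rst z s) (rst z t)"
| "rsub z (Neg f) = Neg (rsub z f)"
| "rsub z (Conj f g) = Conj (rsub z f) (rsub z g)"
| "rsub z (Exists x f) = Exists x (rsub z f)"

lemma tval_rst: "z \<notin> tvars t \<Longrightarrow> tval r a t = tval r' (a(z:=r)) (rst z t)"
  by (cases t) auto

lemma sat_rsub: "z \<notin> vars f \<Longrightarrow> sat V E r a f = sat V E r' (a(z:=r)) (rsub z f)"
proof (induction f arbitrary: a)
  case (Eq s t)
  have "tval r a s = tval r' (a(z:=r)) (rst z s)" "tval r a t = tval r' (a(z:=r)) (rst z t)"
    using Eq.prems by (auto intro: tval_rst)
  then show ?case by (simp only: sat.simps rsub.simps)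
next
  case (Adj s t)
  have "tval r a s = tval r' (a(z:=r)) (rst z s)" "tval r a t = tval r' (a(z:=r)) (rst z t)"
    using Adj.prems by (auto intro: tval_rst)
  then show ?case by (simp only: sat.simps rsub.simps)
next
  case (Neg f)
  have "sat V E r a f = sat V E r' (a(z:=r)) (rsub z f)" by (rule Neg.IH) (use Neg.prems in simp)
  then show ?case by (simp only: sat.simps rsub.simps)
next
  case (Conj f g)
  have "sat V E r a f = sat V E r' (a(z:=r)) (rsub z f)" by (rule Conj.IH(1)) (use Conj.prems in simp)
  moreover have "sat V E r a g = sat V E r' (a(z:=r)) (rsub z g)" by (rule Conj.IH(2)) (use Conj.prems in simp)
  ultimately show ?case by (simp only: sat.simps rsub.simps)
next
  case (Exists x f)
  have xz: "x \<noteq> z" using Exists.prems by auto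
  have "sat V E r (a(x:=v)) f = sat V E r' ((a(x:=v))(z:=r)) (rsub z f)" for v
    by (rule Exists.IH) (use Exists.prems in simp)
  moreover have "(a(x:=v))(z:=r) = (a(z:=r))(x:=v)" for v using xz by (rule fun_upd_twist)
  ultimately show ?case by (simp only: sat.simps rsub.simps)
qed

lemma tvars_rst_sub: "tvars (rst z t) \<subseteq> insert z (tvars t)" by (cases t) auto
lemma tvars_rst_sup: "tvars t \<subseteq> tvars (rst z t)" by (cases t) auto

lemma fv_rsub_sub: "fv (rsub z f) \<subseteq> insert z (fv f)"
proof (induction f)
  case (Eq s t) then show ?case using tvars_rst_sub[of z s] tvars_rst_sub[of z t] by auto
next
  case (Adj s t) then show ?case using tvars_rst_sub[of z s] tvars_rst_sub[of z t] by auto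
qed auto

lemma fv_rsub_sup: "fv f \<subseteq> fv (rsub z f)"
proof (induction f)
  case (Eq s t) then show ?case using tvars_rst_sup[of s z] tvars_rst_sup[of t z] by auto
next
  case (Adj s t) then show ?case using tvars_rst_sup[of s z] tvars_rst_sup[of t z] by auto
qed auto

lemma graph_rsub: "graph_fm (rsub z f)"
proof (induction f)
  case (Eq s t) then show ?case by (cases s; cases t) auto
next
  case (Adj s t) then show ?case by (cases s; cases t) auto
qed auto

lemma modeling_space: "modeling M F \<Longrightarrow> space M = UNIV"
  unfolding modeling_def by (metis sets_eq_imp_space_eq space_borel)

lemma modeling_prob: "modeling M F \<Longrightarrow> prob_space M"
  unfolding modeling_def by simp

lemma fresh_var: "\<exists>z::nat. z \<notin> vars f"
  using ex_new_if_finite[OF infinite_UNIV_nat finite_vars[of f]] by auto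

lemma meas_rooted:
  assumes mod: "modeling M F"
  shows "def_tuples (space M) F b \<psi> \<in> sets (PiM (fv \<psi>) (\<lambda>_. M))"
proof -
  obtain z where z: "z \<notin> vars \<psi>" using fresh_var by blast
  define \<Theta> where "\<Theta> = rsub z \<psi>"
  have S: "space M = UNIV" using modeling_space[OF mod] .
  have D\<Theta>: "def_tuples (space M) F undefined \<Theta> \<in> sets (PiM (fv \<Theta>) (\<lambda>_. M))"
    using mod graph_rsub unfolding modeling_def \<Theta>_def by blast
  define g where "g = (\<lambda>a. \<lambda>i\<in>fv \<Theta>. (a(z:=b)) i)"
  have fvT: "fv \<Theta> \<subseteq> insert z (fv \<psi>)" unfolding \<Theta>_def by (rule fv_rsub_sub)
  have gm: "g \<in> measurable (PiM (fv \<psi>) (\<lambda>_. M)) (PiM (fv \<Theta>) (\<lambda>_. M))"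
    unfolding g_def
  proof (rule measurable_restrict)
    fix i assume i: "i \<in> fv \<Theta>"
    show "(\<lambda>a. (a(z := b)) i) \<in> measurable (PiM (fv \<psi>) (\<lambda>_. M)) M"
    proof (cases "i = z")
      case True then show ?thesis using S by simp
    next
      case False
      then have "i \<in> fv \<psi>" using i fvT by auto
      then show ?thesis using False by simp
    qed
  qed
  have "def_tuples (space M) F b \<psi> = g -` def_tuples (space M) F undefined \<Theta> \<inter> space (PiM (fv \<psi>) (\<lambda>_. M))"
  proof -
    have "sat (space M) F b a \<psi> = sat (space M) F undefined (g a) \<Theta>" for a
    proof -
      have "sat (space M) F b a \<psi> = sat (space M) F undefined (a(z:=b)) \<Theta>"
        unfolding \<Theta>_def by (rule sat_rsub[OF z])
      also have "\<dots> = sat (space M) F undefined (g a) \<Theta>"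
        by (rule sat_cong) (simp add: g_def)
      finally show ?thesis .
    qed
    moreover have "g a \<in> fv \<Theta> \<rightarrow>\<^sub>E space M" for a using S by (simp add: g_def)
    ultimately show ?thesis unfolding def_tuples_def space_PiM by auto
  qed
  then show ?thesis using gm D\<Theta> by (metis measurable_sets)
qed



definition ev :: "nat \<Rightarrow> nat" where "ev x = 2 * x"
definition od :: "nat \<Rightarrow> nat" where "od x = 2 * x + 1"

lemma inj_ev: "inj ev" by (auto simp: inj_def ev_def)
lemma inj_od: "inj od" by (auto simp: inj_def od_def)
lemma ev_od_disj: "ev x \<noteq> od y" by (auto simp: ev_def od_def) presburger
lemma od_ev_disj: "od y \<noteq> ev x" using ev_od_disj by metis
lemma card_ev[simp]: "card (ev ` X) = card X" by (rule card_image) (rule inj_on_subset[OF inj_ev subset_UNIV])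
lemma card_od[simp]: "card (od ` X) = card X" by (rule card_image) (rule inj_on_subset[OF inj_od subset_UNIV])
lemma ev_div[simp]: "ev x div 2 = x" by (simp add: ev_def)
lemma od_div[simp]: "od x div 2 = x" by (simp add: od_def)

definition cj :: "fm \<Rightarrow> fm \<Rightarrow> fm" where "cj A B = Conj (ren ev A) (ren od B)"

lemma fv_cj: "fv (cj A B) = ev ` fv A \<union> od ` fv B"
  by (simp add: cj_def fv_ren inj_ev inj_od)

lemma disj_ev_od: "ev ` X \<inter> od ` Y = {}" using ev_od_disj by blast

lemma card_fv_cj: "card (fv (cj A B)) = card (fv A) + card (fv B)"
  unfolding fv_cj
  by (subst card_Un_disjoint) (auto simp: disj_ev_od)

lemma sat_cj: "sat V E r a (cj A B) = (sat V E r (a \<circ> ev) A \<and> sat V E r (a \<circ> od) B)"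
  by (simp add: cj_def sat_ren inj_ev inj_od)

lemma sat_restrict: "sat V E r (restrict a (fv A)) A = sat V E r a A"
  by (rule sat_cong) simp

definition split_cj :: "fm \<Rightarrow> fm \<Rightarrow> (nat \<Rightarrow> 'v) \<Rightarrow> (nat \<Rightarrow> 'v) \<times> (nat \<Rightarrow> 'v)" where
  "split_cj A B a = (restrict (a \<circ> ev) (fv A), restrict (a \<circ> od) (fv B))"

definition join_cj :: "fm \<Rightarrow> fm \<Rightarrow> (nat \<Rightarrow> 'v) \<times> (nat \<Rightarrow> 'v) \<Rightarrow> (nat \<Rightarrow> 'v)" where
  "join_cj A B p = (\<lambda>v. if v \<in> ev ` fv A then fst p (v div 2) else if v \<in> od ` fv B then snd p (v div 2) else undefined)"

lemma bij_cj: "bij_betw (split_cj A B) (def_tuples V E r (cj A B)) (def_tuples V E r A \<times> def_tuples V E r B)"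
proof (rule bij_betw_byWitness[where f' = "join_cj A B"])
  show "\<forall>a\<in>def_tuples V E r (cj A B). join_cj A B (split_cj A B a) = a"
  proof
    fix a assume a: "a \<in> def_tuples V E r (cj A B)"
    then have ae: "a \<in> fv (cj A B) \<rightarrow>\<^sub>E V" by (simp add: def_tuples_def)
    show "join_cj A B (split_cj A B a) = a"
    proof
      fix v show "join_cj A B (split_cj A B a) v = a v"
      proof (cases "v \<in> ev ` fv A")
        case True then show ?thesis by (auto simp: join_cj_def split_cj_def)
      next
        case False
        show ?thesis
        proof (cases "v \<in> od ` fv B")
          case True then show ?thesis using False by (auto simp: join_cj_def split_cj_def)
        next
          case False2: False
          then have "v \<notin> fv (cj A B)" using False by (simp add: fv_cj)
          then have "a v = undefined" using ae by (simp add: PiE_def extensional_def)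
          then show ?thesis using False False2 by (simp add: join_cj_def)
        qed
      qed
    qed
  qed
  show "\<forall>p\<in>def_tuples V E r A \<times> def_tuples V E r B. split_cj A B (join_cj A B p) = p"
  proof
    fix p assume p: "p \<in> def_tuples V E r A \<times> def_tuples V E r B"
    obtain x y where pxy: "p = (x, y)" by (cases p)
    have x: "x \<in> fv A \<rightarrow>\<^sub>E V" and y: "y \<in> fv B \<rightarrow>\<^sub>E V" using p pxy by (auto simp: def_tuples_def)
    have "restrict (join_cj A B (x,y) \<circ> ev) (fv A) = x"
    proof
      fix u show "restrict (join_cj A B (x,y) \<circ> ev) (fv A) u = x u"
        using x by (auto simp: join_cj_def PiE_def extensional_def inj_image_mem_iff[OF inj_ev])
    qed
    moreover have "restrict (join_cj A B (x,y) \<circ> od) (fv B) = y"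
    proof
      fix u show "restrict (join_cj A B (x,y) \<circ> od) (fv B) u = y u"
        using y od_ev_disj by (auto simp: join_cj_def PiE_def extensional_def inj_image_mem_iff[OF inj_od])
    qed
    ultimately show "split_cj A B (join_cj A B p) = p" by (simp add: split_cj_def pxy)
  qed
  show "split_cj A B ` def_tuples V E r (cj A B) \<subseteq> def_tuples V E r A \<times> def_tuples V E r B"
  proof
    fix p assume "p \<in> split_cj A B ` def_tuples V E r (cj A B)"
    then obtain a where a: "a \<in> def_tuples V E r (cj A B)" and p: "p = split_cj A B a" by blast
    have ae: "a \<in> fv (cj A B) \<rightarrow>\<^sub>E V" and sa: "sat V E r a (cj A B)" using a by (auto simp: def_tuples_def)
    have "restrict (a \<circ> ev) (fv A) \<in> fv A \<rightarrow>\<^sub>E V" using ae by (auto simp: fv_cj)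
    moreover have "restrict (a \<circ> od) (fv B) \<in> fv B \<rightarrow>\<^sub>E V" using ae by (auto simp: fv_cj)
    moreover have "sat V E r (restrict (a \<circ> ev) (fv A)) A" "sat V E r (restrict (a \<circ> od) (fv B)) B"
      using sa by (auto simp: sat_restrict sat_cj)
    ultimately show "p \<in> def_tuples V E r A \<times> def_tuples V E r B"
      by (simp add: p split_cj_def def_tuples_def)
  qed
  show "join_cj A B ` (def_tuples V E r A \<times> def_tuples V E r B) \<subseteq> def_tuples V E r (cj A B)"
  proof
    fix a assume "a \<in> join_cj A B ` (def_tuples V E r A \<times> def_tuples V E r B)"
    then obtain x y where x: "x \<in> def_tuples V E r A" and y: "y \<in> def_tuples V E r B"
      and a: "a = join_cj A B (x, y)" by blast
    have xe: "x \<in> fv A \<rightarrow>\<^sub>E V" and sx: "sat V E r x A" using x by (auto simp: def_tuples_def)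
    have ye: "y \<in> fv B \<rightarrow>\<^sub>E V" and sy: "sat V E r y B" using y by (auto simp: def_tuples_def)
    have "a \<in> fv (cj A B) \<rightarrow>\<^sub>E V"
      using xe ye od_ev_disj ev_od_disj by (auto simp: a join_cj_def fv_cj PiE_def extensional_def Pi_iff)
    moreover have "sat V E r (a \<circ> ev) A"
    proof -
      have "sat V E r (a \<circ> ev) A = sat V E r x A"
        by (rule sat_cong) (auto simp: a join_cj_def)
      then show ?thesis using sx by simp
    qed
    moreover have "sat V E r (a \<circ> od) B"
    proof -
      have "sat V E r (a \<circ> od) B = sat V E r y B"
        by (rule sat_cong) (use od_ev_disj in \<open>auto simp: a join_cj_def\<close>)
      then show ?thesis using sy by simp
    qed
    ultimately show "a \<in> def_tuples V E r (cj A B)" by (simp add: def_tuples_def sat_cj)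
  qed
qed

lemma card_cj: "card (def_tuples V E r (cj A B)) = card (def_tuples V E r A) * card (def_tuples V E r B)"
  using bij_betw_same_card[OF bij_cj] by (simp add: card_cartesian_product)

lemma stone_cj: "stone V E r (cj A B) = stone V E r A * stone V E r B"
  unfolding stone_alt card_cj card_fv_cj by (simp add: power_add)



lemma meas_ren:
  fixes M :: "'v::polish_space measure"
  assumes mod: "modeling M F" and inj: "inj \<sigma>"
  shows "measure (PiM (fv (ren \<sigma> A)) (\<lambda>_. M)) (def_tuples (space M) F b (ren \<sigma> A))
       = measure (PiM (fv A) (\<lambda>_. M)) (def_tuples (space M) F b A)"
proof -
  have P: "prob_space M" using modeling_prob[OF mod] .
  have S: "space M = UNIV" using modeling_space[OF mod] .
  define h where "h = (\<lambda>\<omega>::nat\<Rightarrow>'v. \<lambda>n\<in>fv A. \<omega> (\<sigma> n))"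
  have dist: "distr (PiM (\<sigma> ` fv A) (\<lambda>_. M)) (PiM (fv A) (\<lambda>_. M)) h = PiM (fv A) (\<lambda>_. M)"
    unfolding h_def
    using distr_PiM_reindex[of "\<sigma> ` fv A" "\<lambda>_. M" \<sigma> "fv A"] P inj_on_subset[OF inj subset_UNIV]
    by simp
  have hm: "h \<in> measurable (PiM (\<sigma> ` fv A) (\<lambda>_. M)) (PiM (fv A) (\<lambda>_. M))"
    unfolding h_def by (rule measurable_restrict) simp
  have DA: "def_tuples (space M) F b A \<in> sets (PiM (fv A) (\<lambda>_. M))" by (rule meas_rooted[OF mod])
  have pre: "h -` def_tuples (space M) F b A \<inter> space (PiM (\<sigma> ` fv A) (\<lambda>_. M)) = def_tuples (space M) F b (ren \<sigma> A)"
  proof -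
    have "sat (space M) F b (h a) A = sat (space M) F b a (ren \<sigma> A)" for a
    proof -
      have "sat (space M) F b (h a) A = sat (space M) F b (a \<circ> \<sigma>) A"
        by (rule sat_cong) (simp add: h_def)
      also have "\<dots> = sat (space M) F b a (ren \<sigma> A)" by (rule sat_ren[OF inj, symmetric])
      finally show ?thesis .
    qed
    moreover have "h a \<in> fv A \<rightarrow>\<^sub>E space M" for a using S by (simp add: h_def)
    ultimately show ?thesis unfolding def_tuples_def space_PiM fv_ren[OF inj] S by auto
  qed
  have "measure (PiM (fv A) (\<lambda>_. M)) (def_tuples (space M) F b A)
      = measure (distr (PiM (\<sigma> ` fv A) (\<lambda>_. M)) (PiM (fv A) (\<lambda>_. M)) h) (def_tuples (space M) F b A)"
    by (simp add: dist)
  also have "\<dots> = measure (PiM (\<sigma> ` fv A) (\<lambda>_. M)) (def_tuples (space M) F b (ren \<sigma> A))"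
    by (simp add: measure_distr[OF hm DA] pre)
  finally show ?thesis by (simp add: fv_ren[OF inj])
qed

lemma meas_prod:
  fixes I J :: "nat set"
  assumes P: "prob_space M" and IJ: "I \<inter> J = {}" "finite I" "finite J"
    and X: "X \<in> sets (PiM (I \<union> J) (\<lambda>_. M))"
    and P1: "P1 \<in> sets (PiM I (\<lambda>_. M))" and Q1: "Q1 \<in> sets (PiM J (\<lambda>_. M))"
    and pre: "merge I J -` X \<inter> space (PiM I (\<lambda>_. M) \<Otimes>\<^sub>M PiM J (\<lambda>_. M)) = P1 \<times> Q1"
  shows "measure (PiM (I \<union> J) (\<lambda>_. M)) X = measure (PiM I (\<lambda>_. M)) P1 * measure (PiM J (\<lambda>_. M)) Q1"
proof -
  interpret ps: product_sigma_finite "\<lambda>_::nat. M"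
    unfolding product_sigma_finite_def using prob_space_imp_sigma_finite[OF P] by simp
  interpret pj: prob_space "PiM J (\<lambda>_. M)" by (rule prob_space_PiM) (simp add: P)
  have "measure (PiM (I \<union> J) (\<lambda>_. M)) X
      = measure (distr (PiM I (\<lambda>_. M) \<Otimes>\<^sub>M PiM J (\<lambda>_. M)) (PiM (I \<union> J) (\<lambda>_. M)) (merge I J)) X"
    using ps.distr_merge[OF IJ] by simp
  also have "\<dots> = measure (PiM I (\<lambda>_. M) \<Otimes>\<^sub>M PiM J (\<lambda>_. M)) (P1 \<times> Q1)"
    by (simp add: measure_distr[OF measurable_merge X] pre)
  also have "\<dots> = measure (PiM I (\<lambda>_. M)) P1 * measure (PiM J (\<lambda>_. M)) Q1"
    unfolding measure_def using pj.emeasure_pair_measure_Times[OF P1 Q1] by (simp add: enn2real_mult)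
  finally show ?thesis .
qed

lemma meas_cj:
  assumes mod: "modeling M F"
  shows "stone_mod M F b (cj A B) = stone_mod M F b A * stone_mod M F b B"
proof -
  have P: "prob_space M" using modeling_prob[OF mod] .
  have S: "space M = UNIV" using modeling_space[OF mod] .
  define I where "I = ev ` fv A"
  define J where "J = od ` fv B"
  have IJ: "I \<inter> J = {}" "finite I" "finite J" by (auto simp: I_def J_def disj_ev_od)
  have fvC: "fv (cj A B) = I \<union> J" by (simp add: fv_cj I_def J_def)
  have fvA: "fv (ren ev A) = I" by (simp add: fv_ren inj_ev I_def)
  have fvB: "fv (ren od B) = J" by (simp add: fv_ren inj_od J_def)
  have pre: "merge I J -` def_tuples (space M) F b (cj A B) \<inter> space (PiM I (\<lambda>_. M) \<Otimes>\<^sub>M PiM J (\<lambda>_. M))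
      = def_tuples (space M) F b (ren ev A) \<times> def_tuples (space M) F b (ren od B)"
  proof -
    have "sat (space M) F b (merge I J (x, y)) (cj A B) = (sat (space M) F b x (ren ev A) \<and> sat (space M) F b y (ren od B))" for x y
    proof -
      have "sat (space M) F b (merge I J (x, y)) (ren ev A) = sat (space M) F b x (ren ev A)"
        by (rule sat_cong) (use IJ in \<open>simp add: fvA\<close>)
      moreover have "sat (space M) F b (merge I J (x, y)) (ren od B) = sat (space M) F b y (ren od B)"
        by (rule sat_cong) (use IJ in \<open>simp add: fvB\<close>)
      ultimately show ?thesis by (simp add: cj_def)
    qed
    moreover have "merge I J (x, y) \<in> I \<union> J \<rightarrow>\<^sub>E UNIV" for x y :: "nat \<Rightarrow> 'a"
      by (auto simp: merge_def PiE_def extensional_def)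
    ultimately show ?thesis
      unfolding def_tuples_def space_pair_measure space_PiM S fvC fvA fvB by auto
  qed
  have "measure (PiM (fv (cj A B)) (\<lambda>_. M)) (def_tuples (space M) F b (cj A B))
     = measure (PiM I (\<lambda>_. M)) (def_tuples (space M) F b (ren ev A)) * measure (PiM J (\<lambda>_. M)) (def_tuples (space M) F b (ren od B))"
    unfolding fvC
    by (rule meas_prod[OF P IJ _ _ _ pre])
       (use meas_rooted[OF mod, of b "cj A B"] meas_rooted[OF mod, of b "ren ev A"] meas_rooted[OF mod, of b "ren od B"]
         in \<open>simp_all add: fvC fvA fvB\<close>)
  also have "\<dots> = stone_mod M F b A * stone_mod M F b B"
    using meas_ren[OF mod inj_ev, of A b] meas_ren[OF mod inj_od, of B b]
    by (simp add: stone_mod_alt fvA fvB)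
  finally show ?thesis by (simp add: stone_mod_alt)
qed



fun neqs :: "nat \<Rightarrow> nat list \<Rightarrow> fm" where
  "neqs x [] = TT"
| "neqs x (u # us) = Conj (Neg (Eq (Var x) (Var u))) (neqs x us)"

lemma sat_neqs: "sat V E r a (neqs x us) = (\<forall>u\<in>set us. a x \<noteq> a u)"
  by (induction us) auto

lemma fv_neqs: "fv (neqs x us) = (if us = [] then {} else insert x (set us))"
  by (induction us) auto

lemma graph_neqs: "graph_fm (neqs x us)"
  by (induction us) auto

definition sw :: "nat \<Rightarrow> nat \<Rightarrow> nat \<Rightarrow> nat" where
  "sw p q x = (if x = p then q else if x = q then p else x)"

lemma inj_sw: "inj (sw p q)" by (auto simp: inj_def sw_def)

fun AL :: "fm \<Rightarrow> nat \<Rightarrow> nat \<Rightarrow> nat \<Rightarrow> nat list \<Rightarrow> fm" where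
  "AL P z N 0 us = TT"
| "AL P z N (Suc t) us = Exists (N + Suc t) (Conj (ren (sw z (N + Suc t)) P)
      (Conj (neqs (N + Suc t) us) (AL P z N t ((N + Suc t) # us))))"

lemma graph_AL: "graph_fm P \<Longrightarrow> graph_fm (AL P z N t us)"
  by (induction t arbitrary: us) (auto simp: graph_ren graph_neqs)

lemma card_step:
  assumes "finite T"
  shows "(\<exists>w\<in>T. t \<le> card (T - {w})) = (Suc t \<le> card T)"
proof
  assume "\<exists>w\<in>T. t \<le> card (T - {w})"
  then obtain w where "w \<in> T" "t \<le> card (T - {w})" by blast
  then show "Suc t \<le> card T" using assms card_Diff1_less[of T w] by simp
next
  assume a: "Suc t \<le> card T"
  then have "T \<noteq> {}" by auto
  then obtain w where w: "w \<in> T" by blast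
  then have "t \<le> card (T - {w})" using a assms by (simp add: card_Diff_singleton)
  then show "\<exists>w\<in>T. t \<le> card (T - {w})" using w by blast
qed

lemma sat_AL:
  assumes fvP: "fv P \<subseteq> insert z Y" and zY: "z \<notin> Y" and bnd: "\<forall>y\<in>insert z Y. y \<le> N"
    and us: "\<forall>u\<in>set us. N + t < u"
    and fin: "finite {v\<in>V. sat V E r (a(z:=v)) P}"
  shows "sat V E r a (AL P z N t us) = (t \<le> card ({v\<in>V. sat V E r (a(z:=v)) P} - a ` set us))"
  using us fin
proof (induction t arbitrary: a us)
  case 0
  then show ?case by simp
next
  case (Suc t)
  define x where "x = N + Suc t"
  define SQ where "SQ = {v\<in>V. sat V E r (a(z:=v)) P}"
  have xz: "x \<noteq> z" and xY: "x \<notin> Y" using bnd unfolding x_def by auto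
  have xus: "x \<notin> set us" using Suc.prems(1) unfolding x_def by auto
  have Q1: "sat V E r (a(x:=w)) (ren (sw z x) P) = (w \<in> SQ)" if "w \<in> V" for w
  proof -
    have "sat V E r (a(x:=w)) (ren (sw z x) P) = sat V E r ((a(x:=w)) \<circ> sw z x) P"
      by (rule sat_ren[OF inj_sw])
    also have "\<dots> = sat V E r (a(z:=w)) P"
    proof (rule sat_cong)
      fix y assume "y \<in> fv P"
      then have "y = z \<or> y \<in> Y" using fvP by auto
      then show "((a(x:=w)) \<circ> sw z x) y = (a(z:=w)) y"
        using xz xY zY by (auto simp: sw_def)
    qed
    finally show ?thesis using that by (simp add: SQ_def)
  qed
  have Q2: "{v\<in>V. sat V E r ((a(x:=w))(z:=v)) P} = SQ" for w
  proof -
    have "sat V E r ((a(x:=w))(z:=v)) P = sat V E r (a(z:=v)) P" for v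
      by (rule sat_cong) (use fvP xY xz in auto)
    then show ?thesis by (simp add: SQ_def)
  qed
  have finSQ: "finite SQ" using Suc.prems(2) unfolding SQ_def .
  have IH: "sat V E r (a(x:=w)) (AL P z N t (x # us)) = (t \<le> card (SQ - insert w (a ` set us)))" for w
  proof -
    have "sat V E r (a(x:=w)) (AL P z N t (x # us)) =
        (t \<le> card ({v\<in>V. sat V E r ((a(x:=w))(z:=v)) P} - (a(x:=w)) ` set (x # us)))"
      apply (rule Suc.IH)
      subgoal using Suc.prems(1) by (auto simp: x_def)
      subgoal unfolding Q2 by (rule finSQ)
      done
    moreover have "(a(x:=w)) ` set (x # us) = insert w (a ` set us)" using xus by auto
    ultimately show ?thesis using Q2 by simp
  qed
  have N2: "sat V E r (a(x:=w)) (neqs x us) = (w \<notin> a ` set us)" for w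
    using xus by (auto simp: sat_neqs)
  have "sat V E r a (AL P z N (Suc t) us) =
      (\<exists>w\<in>V. sat V E r (a(x:=w)) (ren (sw z x) P) \<and> sat V E r (a(x:=w)) (neqs x us)
           \<and> sat V E r (a(x:=w)) (AL P z N t (x # us)))"
    by (simp add: x_def)
  also have "\<dots> = (\<exists>w\<in>SQ - a ` set us. t \<le> card ((SQ - a ` set us) - {w}))"
  proof -
    have SV: "SQ \<subseteq> V" by (auto simp: SQ_def)
    have "(sat V E r (a(x:=w)) (ren (sw z x) P) \<and> sat V E r (a(x:=w)) (neqs x us)
           \<and> sat V E r (a(x:=w)) (AL P z N t (x # us))) = (w \<in> SQ - a ` set us \<and> t \<le> card ((SQ - a ` set us) - {w}))"
      if "w \<in> V" for w
    proof -
      have "SQ - insert w (a ` set us) = (SQ - a ` set us) - {w}" by blast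
      then show ?thesis unfolding Q1[OF that] N2 IH by (simp only: Diff_iff conj_assoc)
    qed
    note eq = this
    show ?thesis
    proof
      assume "\<exists>w\<in>V. sat V E r (a(x:=w)) (ren (sw z x) P) \<and> sat V E r (a(x:=w)) (neqs x us)
           \<and> sat V E r (a(x:=w)) (AL P z N t (x # us))"
      then obtain w where w: "w \<in> V" and h: "sat V E r (a(x:=w)) (ren (sw z x) P) \<and> sat V E r (a(x:=w)) (neqs x us)
           \<and> sat V E r (a(x:=w)) (AL P z N t (x # us))" by blast
      have "w \<in> SQ - a ` set us \<and> t \<le> card ((SQ - a ` set us) - {w})" using eq[OF w] h by blast
      then show "\<exists>w\<in>SQ - a ` set us. t \<le> card ((SQ - a ` set us) - {w})" by blast
    next
      assume "\<exists>w\<in>SQ - a ` set us. t \<le> card ((SQ - a ` set us) - {w})"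
      then obtain w where w: "w \<in> SQ - a ` set us" and h: "t \<le> card ((SQ - a ` set us) - {w})" by blast
      have wV: "w \<in> V" using w SV by blast
      have "sat V E r (a(x:=w)) (ren (sw z x) P) \<and> sat V E r (a(x:=w)) (neqs x us)
           \<and> sat V E r (a(x:=w)) (AL P z N t (x # us))" using eq[OF wV] w h by blast
      then show "\<exists>w\<in>V. sat V E r (a(x:=w)) (ren (sw z x) P) \<and> sat V E r (a(x:=w)) (neqs x us)
           \<and> sat V E r (a(x:=w)) (AL P z N t (x # us))" using wV by blast
    qed
  qed
  also have "\<dots> = (Suc t \<le> card (SQ - a ` set us))"
    by (rule card_step) (use finSQ in simp)
  finally show ?case unfolding SQ_def .
qed

lemma fv_AL:
  assumes fvP: "fv P = insert z Y" and zY: "z \<notin> Y" and bnd: "\<forall>y\<in>insert z Y. y \<le> N"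
    and us: "\<forall>u\<in>set us. N + t < u"
  shows "fv (AL P z N t us) = (if t = 0 then {} else Y \<union> set us)"
  using us
proof (induction t arbitrary: us)
  case 0 then show ?case by simp
next
  case (Suc t)
  define x where "x = N + Suc t"
  have xz: "x \<noteq> z" and xY: "x \<notin> Y" using bnd unfolding x_def by auto
  have xus: "x \<notin> set us" using Suc.prems(1) unfolding x_def by auto
  have f1: "fv (ren (sw z x) P) = insert x Y"
  proof -
    have "fv (ren (sw z x) P) = sw z x ` insert z Y" by (simp add: fv_ren[OF inj_sw] fvP)
    also have "\<dots> = insert x Y" using xz xY zY by (auto simp: sw_def)
    finally show ?thesis .
  qed
  have f2: "fv (AL P z N t (x # us)) = (if t = 0 then {} else Y \<union> insert x (set us))"
    by (subst Suc.IH) (use Suc.prems in \<open>auto simp: x_def\<close>)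
  have e: "AL P z N (Suc t) us = Exists x (Conj (ren (sw z x) P) (Conj (neqs x us) (AL P z N t (x # us))))"
    by (simp add: x_def)
  show ?case
    unfolding e using f1 f2 xus xY by (auto simp: fv_neqs split: if_splits)
qed



definition zf :: "fm \<Rightarrow> nat" where "zf \<psi> = (SOME z. z \<notin> vars \<psi>)"
definition Pf :: "nat \<Rightarrow> fm \<Rightarrow> fm \<Rightarrow> fm" where
  "Pf x0 xi \<psi> = Conj (ren (sw x0 (zf \<psi>)) xi) (rsub (zf \<psi>) \<psi>)"
definition Nf :: "fm \<Rightarrow> nat" where "Nf \<psi> = Max (insert (zf \<psi>) (fv \<psi>))"
definition ALt :: "nat \<Rightarrow> fm \<Rightarrow> fm \<Rightarrow> nat \<Rightarrow> fm" where
  "ALt x0 xi \<psi> t = AL (Pf x0 xi \<psi>) (zf \<psi>) (Nf \<psi>) t []"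

lemma zf: "zf \<psi> \<notin> vars \<psi>"
  unfolding zf_def using fresh_var by (rule someI_ex)

lemma zf_fv: "zf \<psi> \<notin> fv \<psi>" using zf fv_vars by blast

lemma fv_Pf: assumes "fv xi = {x0}" shows "fv (Pf x0 xi \<psi>) = insert (zf \<psi>) (fv \<psi>)"
proof -
  have "fv (ren (sw x0 (zf \<psi>)) xi) = {zf \<psi>}" by (simp add: fv_ren[OF inj_sw] assms sw_def)
  then show ?thesis using fv_rsub_sub[of "zf \<psi>" \<psi>] fv_rsub_sup[of \<psi> "zf \<psi>"] by (auto simp: Pf_def)
qed

lemma bnd_Nf: "\<forall>y\<in>insert (zf \<psi>) (fv \<psi>). y \<le> Nf \<psi>"
  unfolding Nf_def by (simp add: Max_ge)

lemma graph_ALt: "graph_fm xi \<Longrightarrow> graph_fm (ALt x0 xi \<psi> t)"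
  unfolding ALt_def by (rule graph_AL) (simp add: Pf_def graph_ren graph_rsub)

lemma fv_ALt: assumes "fv xi = {x0}" "t \<noteq> 0" shows "fv (ALt x0 xi \<psi> t) = fv \<psi>"
proof -
  have "fv (AL (Pf x0 xi \<psi>) (zf \<psi>) (Nf \<psi>) t []) = (if t = 0 then {} else fv \<psi> \<union> set [])"
    by (rule fv_AL) (use fv_Pf[OF assms(1)] zf_fv bnd_Nf in auto)
  then show ?thesis using assms(2) by (simp add: ALt_def)
qed

lemma sat_Pf:
  assumes "fv xi = {x0}" "graph_fm xi"
  shows "{v\<in>V. sat V E r (a(zf \<psi>:=v)) (Pf x0 xi \<psi>)} = {v\<in>def_set V E xi. sat V E v a \<psi>}"
proof -
  have "sat V E r (a(zf \<psi>:=v)) (ren (sw x0 (zf \<psi>)) xi) = sat V E undefined (\<lambda>_. v) xi" for v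
  proof -
    have "sat V E r (a(zf \<psi>:=v)) (ren (sw x0 (zf \<psi>)) xi) = sat V E r ((a(zf \<psi>:=v)) \<circ> sw x0 (zf \<psi>)) xi"
      by (rule sat_ren[OF inj_sw])
    also have "\<dots> = sat V E r (\<lambda>_. v) xi" by (rule sat_cong) (simp add: assms sw_def)
    also have "\<dots> = sat V E undefined (\<lambda>_. v) xi" by (rule sat_graph_root[OF assms(2)])
    finally show ?thesis .
  qed
  moreover have "sat V E r (a(zf \<psi>:=v)) (rsub (zf \<psi>) \<psi>) = sat V E v a \<psi>" for v
    using sat_rsub[OF zf, where V=V and E=E and r=v and a=a and r'=r] by simp
  ultimately show ?thesis by (auto simp: Pf_def def_set_def)
qed

lemma sat_ALt:
  assumes "fv xi = {x0}" "graph_fm xi" "finite (def_set V E xi)"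
  shows "sat V E r a (ALt x0 xi \<psi> t) = (t \<le> card {v\<in>def_set V E xi. sat V E v a \<psi>})"
proof -
  have fin: "finite {v\<in>V. sat V E r (a(zf \<psi>:=v)) (Pf x0 xi \<psi>)}"
    unfolding sat_Pf[OF assms(1,2)] using assms(3) by simp
  have 1: "sat V E r a (ALt x0 xi \<psi> t) = (t \<le> card ({v\<in>V. sat V E r (a(zf \<psi>:=v)) (Pf x0 xi \<psi>)} - a ` set []))"
    unfolding ALt_def by (rule sat_AL) (use fin fv_Pf[OF assms(1)] zf_fv bnd_Nf in auto)
  have 2: "{v\<in>V. sat V E r (a(zf \<psi>:=v)) (Pf x0 xi \<psi>)} = {v\<in>def_set V E xi. sat V E v a \<psi>}"
    by (rule sat_Pf[OF assms(1,2)])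
  show ?thesis using 1 unfolding 2 by simp
qed

lemma card_filter_sum: "finite A \<Longrightarrow> card {x\<in>A. P x} = (\<Sum>x\<in>A. if P x then 1 else 0)"
proof -
  assume fin: "finite A"
  have "card {x\<in>A. P x} = (\<Sum>x\<in>{x\<in>A. P x}. 1)" by simp
  also have "\<dots> = (\<Sum>x\<in>A. if P x then 1 else 0)" by (rule sum.inter_filter[OF fin])
  finally show ?thesis .
qed

lemma sum_le_count: "c \<le> k \<Longrightarrow> (\<Sum>t\<in>{1..k}. if t \<le> c then 1 else 0 :: nat) = c"
proof -
  assume "c \<le> k"
  then have "{t\<in>{1..k}. t \<le> c} = {1..c}" by auto
  then show ?thesis using card_filter_sum[of "{1..k}" "\<lambda>t. t \<le> c"] by simp
qed



lemma emeasure_prob_lt: "prob_space N \<Longrightarrow> emeasure N A < \<infinity>"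
  by (simp add: infinity_ennreal_def less_top[symmetric] finite_measure.emeasure_finite prob_space_def)

lemma sum_le_count_real: "c \<le> k \<Longrightarrow> (\<Sum>t\<in>{1..k}. if t \<le> c then 1 else 0 :: real) = real c"
proof -
  assume "c \<le> k"
  then have "real (\<Sum>t\<in>{1..k}. if t \<le> c then 1 else 0 :: nat) = real c" using sum_le_count by metis
  then show ?thesis by (simp add: of_nat_sum if_distrib cong: if_cong)
qed

lemma card_filter_sum_real: "finite A \<Longrightarrow> real (card {x\<in>A. P x}) = (\<Sum>x\<in>A. if P x then 1 else 0)"
  by (simp add: card_filter_sum of_nat_sum if_distrib cong: if_cong)

lemma countB_fin:
  assumes finV: "finite V" and xi: "fv xi = {x0}" "graph_fm xi" and k: "card (def_set V E xi) \<le> k"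
  shows "(\<Sum>r\<in>def_set V E xi. stone V E r \<psi>) = (\<Sum>t\<in>{1..k}. stone V E undefined (ALt x0 xi \<psi> t))"
proof -
  define X where "X = def_set V E xi"
  define PE where "PE = fv \<psi> \<rightarrow>\<^sub>E V"
  define c where "c a = card {v\<in>X. sat V E v a \<psi>}" for a
  have finX: "finite X" using finV by (simp add: X_def def_set_def)
  have finPE: "finite PE" using finV by (simp add: PE_def finite_PiE)
  have cX: "c a \<le> k" for a
  proof -
    have "c a \<le> card X" unfolding c_def by (rule card_mono[OF finX]) auto
    then show ?thesis using k by (simp add: X_def)
  qed
  have D1: "card (def_tuples V E r \<psi>) = (\<Sum>a\<in>PE. if sat V E r a \<psi> then 1 else 0)" for r
    unfolding def_tuples_def PE_def[symmetric] by (rule card_filter_sum[OF finPE])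
  have D2: "card (def_tuples V E undefined (ALt x0 xi \<psi> t)) = (\<Sum>a\<in>PE. if t \<le> c a then 1 else 0)"
    if "t \<in> {1..k}" for t
  proof -
    have "def_tuples V E undefined (ALt x0 xi \<psi> t) = {a\<in>PE. t \<le> c a}"
      using that unfolding def_tuples_def PE_def c_def X_def
      by (simp add: fv_ALt[OF xi(1)] sat_ALt[OF xi finX[unfolded X_def]])
    then show ?thesis using card_filter_sum[OF finPE] by simp
  qed
  have nat: "(\<Sum>r\<in>X. card (def_tuples V E r \<psi>)) = (\<Sum>t\<in>{1..k}. card (def_tuples V E undefined (ALt x0 xi \<psi> t)))"
  proof -
    have "(\<Sum>r\<in>X. card (def_tuples V E r \<psi>)) = (\<Sum>r\<in>X. \<Sum>a\<in>PE. if sat V E r a \<psi> then 1 else 0)"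
      using D1 by simp
    also have "\<dots> = (\<Sum>a\<in>PE. \<Sum>r\<in>X. if sat V E r a \<psi> then 1 else 0)" by (rule sum.swap)
    also have "\<dots> = (\<Sum>a\<in>PE. c a)"
      unfolding c_def using card_filter_sum[OF finX] by simp
    also have "\<dots> = (\<Sum>a\<in>PE. \<Sum>t\<in>{1..k}. if t \<le> c a then 1 else 0)"
      using sum_le_count[OF cX] by simp
    also have "\<dots> = (\<Sum>t\<in>{1..k}. \<Sum>a\<in>PE. if t \<le> c a then 1 else 0)" by (rule sum.swap)
    also have "\<dots> = (\<Sum>t\<in>{1..k}. card (def_tuples V E undefined (ALt x0 xi \<psi> t)))"
      using D2 by simp
    finally show ?thesis .
  qed
  have "(\<Sum>r\<in>X. stone V E r \<psi>) = (\<Sum>r\<in>X. real (card (def_tuples V E r \<psi>))) / real (card V) ^ card (fv \<psi>)"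
    unfolding stone_alt by (simp add: sum_divide_distrib)
  also have "\<dots> = (\<Sum>t\<in>{1..k}. real (card (def_tuples V E undefined (ALt x0 xi \<psi> t)))) / real (card V) ^ card (fv \<psi>)"
    using arg_cong[OF nat, of real] by (simp add: of_nat_sum)
  also have "\<dots> = (\<Sum>t\<in>{1..k}. stone V E undefined (ALt x0 xi \<psi> t))"
    unfolding stone_alt sum_divide_distrib by (rule sum.cong) (simp_all add: fv_ALt[OF xi(1)])
  finally show ?thesis by (simp add: X_def)
qed

lemma countB_mod:
  assumes mod: "modeling M F" and xi: "fv xi = {x0}" "graph_fm xi"
    and finX: "finite (def_set (space M) F xi)" and k: "card (def_set (space M) F xi) \<le> k"
  shows "(\<Sum>b\<in>def_set (space M) F xi. stone_mod M F b \<psi>) = (\<Sum>t\<in>{1..k}. stone_mod M F undefined (ALt x0 xi \<psi> t))"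
proof -
  define X where "X = def_set (space M) F xi"
  define PY where "PY = PiM (fv \<psi>) (\<lambda>_. M)"
  have P: "prob_space M" using modeling_prob[OF mod] .
  interpret py: prob_space PY unfolding PY_def by (rule prob_space_PiM) (simp add: P)
  define c where "c a = card {v\<in>X. sat (space M) F v a \<psi>}" for a
  have cX: "c a \<le> k" for a
  proof -
    have "c a \<le> card X" unfolding c_def by (rule card_mono) (use finX in \<open>auto simp: X_def\<close>)
    then show ?thesis using k by (simp add: X_def)
  qed
  have spPY: "space PY = fv \<psi> \<rightarrow>\<^sub>E space M" by (simp add: PY_def space_PiM)
  have mi: "measure PY A = integral\<^sup>L PY (indicator A)" if "A \<subseteq> space PY" for A
    using that by (simp add: Int_absorb2)
  have integ: "integrable PY (indicator A :: _ \<Rightarrow> real)" if "A \<in> sets PY" for A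
  proof -
    have "emeasure PY A < \<infinity>" by (rule emeasure_prob_lt) (rule py.prob_space_axioms)
    then show ?thesis by (rule integrable_real_indicator[OF that])
  qed
  define DT where "DT t = def_tuples (space M) F undefined (ALt x0 xi \<psi> t)" for t
  define Db where "Db b = def_tuples (space M) F b \<psi>" for b
  have DTs: "DT t \<in> sets PY" if "t \<in> {1..k}" for t
  proof -
    have m: "def_tuples (space M) F undefined (ALt x0 xi \<psi> t) \<in> sets (PiM (fv (ALt x0 xi \<psi> t)) (\<lambda>_. M))"
      using mod graph_ALt[OF xi(2)] unfolding modeling_def by blast
    have "t \<noteq> 0" using that by simp
    then show ?thesis using m fv_ALt[OF xi(1), of t \<psi>] by (simp add: DT_def PY_def)
  qed
  have Dbs: "Db b \<in> sets PY" for b unfolding Db_def PY_def by (rule meas_rooted[OF mod])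
  have DTsub: "DT t \<subseteq> space PY" if "t \<in> {1..k}" for t
    using DTs[OF that] by (rule sets.sets_into_space)
  have Dbsub: "Db b \<subseteq> space PY" for b using Dbs[of b] by (rule sets.sets_into_space)
  have pw: "(\<Sum>t\<in>{1..k}. indicator (DT t) a) = (\<Sum>b\<in>X. indicator (Db b) a :: real)" if a: "a \<in> space PY" for a
  proof -
    have "indicator (DT t) a = (if t \<le> c a then 1 else 0 :: real)" if "t \<in> {1..k}" for t
    proof -
      have "a \<in> DT t \<longleftrightarrow> t \<le> c a"
        using a that unfolding DT_def def_tuples_def spPY c_def X_def
        by (simp add: fv_ALt[OF xi(1)] sat_ALt[OF xi finX])
      then show ?thesis by (simp add: indicator_def)
    qed
    then have "(\<Sum>t\<in>{1..k}. indicator (DT t) a) = (\<Sum>t\<in>{1..k}. if t \<le> c a then 1 else 0 :: real)"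
      by (rule sum.cong[OF refl])
    also have "\<dots> = real (c a)" by (rule sum_le_count_real[OF cX])
    also have "\<dots> = (\<Sum>b\<in>X. if sat (space M) F b a \<psi> then 1 else 0)"
      unfolding c_def by (rule card_filter_sum_real) (use finX in \<open>simp add: X_def\<close>)
    also have "\<dots> = (\<Sum>b\<in>X. indicator (Db b) a)"
      using a unfolding Db_def def_tuples_def spPY by (intro sum.cong) (auto simp: indicator_def)
    finally show ?thesis .
  qed
  have "(\<Sum>t\<in>{1..k}. measure PY (DT t)) = (\<Sum>t\<in>{1..k}. integral\<^sup>L PY (indicator (DT t)))"
  proof (rule sum.cong[OF refl])
    fix t assume "t \<in> {1..k}"
    then show "measure PY (DT t) = integral\<^sup>L PY (indicator (DT t))" by (rule mi[OF DTsub])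
  qed
  also have "\<dots> = integral\<^sup>L PY (\<lambda>a. \<Sum>t\<in>{1..k}. indicator (DT t) a)"
    by (rule Bochner_Integration.integral_sum[where I="{1..k}" and M=PY and f="\<lambda>t. indicator (DT t)", symmetric]) (rule integ[OF DTs])
  also have "\<dots> = integral\<^sup>L PY (\<lambda>a. \<Sum>b\<in>X. indicator (Db b) a)"
    by (rule Bochner_Integration.integral_cong) (rule refl, rule pw)
  also have "\<dots> = (\<Sum>b\<in>X. integral\<^sup>L PY (indicator (Db b)))"
    by (rule Bochner_Integration.integral_sum[where I=X and M=PY and f="\<lambda>b. indicator (Db b)"]) (rule integ[OF Dbs])
  also have "\<dots> = (\<Sum>b\<in>X. measure PY (Db b))"
    by (rule sum.cong[OF refl]) (rule mi[OF Dbsub, symmetric])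
  finally have eq: "(\<Sum>t\<in>{1..k}. measure PY (DT t)) = (\<Sum>b\<in>X. measure PY (Db b))" .
  have "(\<Sum>t\<in>{1..k}. stone_mod M F undefined (ALt x0 xi \<psi> t)) = (\<Sum>t\<in>{1..k}. measure PY (DT t))"
    unfolding stone_mod_alt DT_def PY_def by (rule sum.cong) (simp_all add: fv_ALt[OF xi(1)])
  moreover have "(\<Sum>b\<in>X. stone_mod M F b \<psi>) = (\<Sum>b\<in>X. measure PY (Db b))"
    unfolding stone_mod_alt Db_def PY_def by simp
  ultimately show ?thesis using eq by (simp add: X_def)
qed

lemma claimB:
  assumes fin: "\<And>n. finite (V n)" and lim: "modeling_limit V E M F"
    and xi: "fv xi = {x0}" "graph_fm xi" and xi_fin: "finite (def_set (space M) F xi)"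
    and xi_card: "\<And>n. card (def_set (V n) (E n) xi) = card (def_set (space M) F xi)"
  shows "(\<lambda>n. \<Sum>r\<in>def_set (V n) (E n) xi. stone (V n) (E n) r \<psi>) \<longlonglongrightarrow> (\<Sum>b\<in>def_set (space M) F xi. stone_mod M F b \<psi>)"
proof -
  define k where "k = card (def_set (space M) F xi)"
  have mod: "modeling M F" using lim by (simp add: modeling_limit_def)
  have L: "(\<lambda>n. \<Sum>r\<in>def_set (V n) (E n) xi. stone (V n) (E n) r \<psi>) = (\<lambda>n. \<Sum>t\<in>{1..k}. stone (V n) (E n) undefined (ALt x0 xi \<psi> t))"
  proof
    fix n show "(\<Sum>r\<in>def_set (V n) (E n) xi. stone (V n) (E n) r \<psi>) = (\<Sum>t\<in>{1..k}. stone (V n) (E n) undefined (ALt x0 xi \<psi> t))"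
      by (rule countB_fin[OF fin xi]) (simp add: xi_card k_def)
  qed
  have R: "(\<Sum>b\<in>def_set (space M) F xi. stone_mod M F b \<psi>) = (\<Sum>t\<in>{1..k}. stone_mod M F undefined (ALt x0 xi \<psi> t))"
    by (rule countB_mod[OF mod xi xi_fin]) (simp add: k_def)
  show ?thesis unfolding L R
    by (rule tendsto_sum) (use lim graph_ALt[OF xi(2)] in \<open>simp add: modeling_limit_def\<close>)
qed



fun cl :: "fm list \<Rightarrow> fm" where
  "cl [] = TT"
| "cl (f # fs) = cj f (cl fs)"

lemma stone_TT: "stone V E r TT = 1" by (simp add: stone_def)
lemma stone_mod_TT: "stone_mod M F r TT = 1" by (simp add: stone_mod_def)

lemma stone_cl: "stone V E r (cl fs) = prod_list (map (stone V E r) fs)"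
  by (induction fs) (simp_all add: stone_TT stone_cj)

lemma stone_mod_cl: "modeling M F \<Longrightarrow> stone_mod M F r (cl fs) = prod_list (map (stone_mod M F r) fs)"
  by (induction fs) (simp_all add: stone_mod_TT meas_cj)

definition peval :: "(real \<times> nat list) list \<Rightarrow> (nat \<Rightarrow> real) \<Rightarrow> real" where
  "peval ps w = sum_list (map (\<lambda>(c, js). c * prod_list (map w js)) ps)"

lemma peval_Nil[simp]: "peval [] w = 0" by (simp add: peval_def)
lemma peval_Cons[simp]: "peval ((c, js) # ps) w = c * prod_list (map w js) + peval ps w"
  by (simp add: peval_def)
lemma peval_append: "peval (ps @ qs) w = peval ps w + peval qs w"
  by (simp add: peval_def)

definition ispoly :: "((nat \<Rightarrow> real) \<Rightarrow> real) \<Rightarrow> bool" where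
  "ispoly f \<longleftrightarrow> (\<exists>ps. \<forall>w. f w = peval ps w)"

lemma ispoly_const: "ispoly (\<lambda>w. c)"
  unfolding ispoly_def by (rule exI[of _ "[(c, [])]"]) simp

lemma ispoly_proj: "ispoly (\<lambda>w. w j)"
  unfolding ispoly_def by (rule exI[of _ "[(1, [j])]"]) simp

lemma ispoly_add: "ispoly f \<Longrightarrow> ispoly g \<Longrightarrow> ispoly (\<lambda>w. f w + g w)"
  unfolding ispoly_def by (metis peval_append)

lemma peval_mono_mult:
  "c * prod_list (map w js) * peval qs w = peval (map (\<lambda>(d, ks). (c * d, js @ ks)) qs) w"
  by (induction qs) (auto simp: algebra_simps)

lemma ispoly_mult: assumes "ispoly f" "ispoly g" shows "ispoly (\<lambda>w. f w * g w)"
proof -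
  obtain ps where ps: "\<And>w. f w = peval ps w" using assms(1) unfolding ispoly_def by blast
  obtain qs where qs: "\<And>w. g w = peval qs w" using assms(2) unfolding ispoly_def by blast
  have "\<exists>rs. \<forall>w. peval ps w * peval qs w = peval rs w"
  proof (induction ps)
    case Nil then show ?case by (rule exI[of _ "[]"]) simp
  next
    case (Cons p ps)
    obtain c js where p: "p = (c, js)" by (cases p)
    obtain rs where rs: "\<And>w. peval ps w * peval qs w = peval rs w" using Cons by blast
    have "peval (p # ps) w * peval qs w = peval (map (\<lambda>(d, ks). (c * d, js @ ks)) qs @ rs) w" for w
      by (simp add: p peval_append distrib_right rs peval_mono_mult[symmetric])
    then show ?case by blast
  qed
  then show ?thesis unfolding ispoly_def using ps qs by simp
qed

lemma ispoly_diff: "ispoly f \<Longrightarrow> ispoly g \<Longrightarrow> ispoly (\<lambda>w. f w - g w)"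
proof -
  assume f: "ispoly f" and g: "ispoly g"
  have "ispoly (\<lambda>w. (-1) * g w)" by (rule ispoly_mult[OF ispoly_const g])
  then have "ispoly (\<lambda>w. f w + (-1) * g w)" by (rule ispoly_add[OF f])
  then show ?thesis by simp
qed

lemma ispoly_sum: "finite I \<Longrightarrow> (\<And>i. i \<in> I \<Longrightarrow> ispoly (f i)) \<Longrightarrow> ispoly (\<lambda>w. \<Sum>i\<in>I. f i w)"
proof (induction I rule: finite_induct)
  case empty then show ?case using ispoly_const[of 0] by simp
next
  case (insert x F)
  have "ispoly (\<lambda>w. f x w + (\<Sum>i\<in>F. f i w))" by (rule ispoly_add) (use insert in auto)
  then show ?case using insert by simp
qed

lemma ispoly_prod: "finite I \<Longrightarrow> (\<And>i. i \<in> I \<Longrightarrow> ispoly (f i)) \<Longrightarrow> ispoly (\<lambda>w. \<Prod>i\<in>I. f i w)"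
proof (induction I rule: finite_induct)
  case empty then show ?case using ispoly_const[of 1] by simp
next
  case (insert x F)
  have "ispoly (\<lambda>w. f x w * (\<Prod>i\<in>F. f i w))" by (rule ispoly_mult) (use insert in auto)
  then show ?case using insert by simp
qed



lemma abstract_approx:
  fixes S :: "nat \<Rightarrow> 'a set" and W :: "nat \<Rightarrow> 'a \<Rightarrow> nat \<Rightarrow> real"
    and T :: "'b set" and VL :: "'b \<Rightarrow> nat \<Rightarrow> real"
  assumes finS: "\<And>n. finite (S n)" and neS: "\<And>n. S n \<noteq> {}" and finT: "finite T" and aT: "a \<in> T"
    and conv: "\<And>f. ispoly f \<Longrightarrow> (\<lambda>n. \<Sum>r\<in>S n. f (W n r)) \<longlonglongrightarrow> (\<Sum>b\<in>T. f (VL b))"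
  shows "\<exists>r. (\<forall>n. r n \<in> S n) \<and> (\<forall>j\<le>i. (\<lambda>n. W n (r n) j) \<longlonglongrightarrow> VL a j)"
proof -
  define D where "D c w = (\<Sum>j\<le>i. (w j - c j)^2)" for c w :: "nat \<Rightarrow> real"
  have Dnn: "0 \<le> D c w" for c w unfolding D_def by (simp add: sum_nonneg)
  have Dpoly: "ispoly (D c)" for c
  proof -
    have "ispoly (\<lambda>w. \<Sum>j\<le>i. (w j - c j) * (w j - c j))"
      by (intro ispoly_sum ispoly_mult ispoly_diff ispoly_proj ispoly_const) simp
    moreover have "D c = (\<lambda>w. \<Sum>j\<le>i. (w j - c j) * (w j - c j))"
      by (simp add: D_def power2_eq_square fun_eq_iff)
    ultimately show ?thesis by simp
  qed
  have Dzero: "w j = c j" if "D c w = 0" "j \<le> i" for c w j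
  proof -
    have "\<forall>j\<in>{..i}. (w j - c j)^2 = 0"
      using that(1) unfolding D_def by (subst sum_nonneg_eq_0_iff[symmetric]) auto
    then show ?thesis using that(2) by simp
  qed
  have coord: "(w j - c j)^2 \<le> D c w" if "j \<le> i" for c w j
    unfolding D_def by (rule member_le_sum) (use that in auto)
  define g where "g n r = D (VL a) (W n r)" for n r
  have exmin: "\<exists>r. r \<in> S n \<and> (\<forall>y\<in>S n. g n r \<le> g n y)" for n
  proof -
    have "Min (g n ` S n) \<in> g n ` S n" using finS neS by (intro Min_in) auto
    then obtain r where r: "r \<in> S n" "g n r = Min (g n ` S n)" by auto
    have "\<forall>y\<in>S n. g n r \<le> g n y" using r finS by (auto intro: Min_le)
    then show ?thesis using r by blast
  qed
  define r where "r n = (SOME r. r \<in> S n \<and> (\<forall>y\<in>S n. g n r \<le> g n y))" for n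
  have r: "r n \<in> S n \<and> (\<forall>y\<in>S n. g n (r n) \<le> g n y)" for n
    unfolding r_def by (rule someI_ex[OF exmin])
  have small: "eventually (\<lambda>n. g n (r n) < \<epsilon>) sequentially" if eps: "\<epsilon> > 0" for \<epsilon>
  proof -
    define B where "B = {b\<in>T. D (VL b) (VL a) \<noteq> 0}"
    have finB: "finite B" using finT by (simp add: B_def)
    define Fe where "Fe w = (\<Prod>b\<in>B. D (VL b) w) * (\<epsilon> - D (VL a) w)" for w
    have Fpoly: "ispoly Fe"
    proof -
      have "ispoly (\<lambda>w. (\<Prod>b\<in>B. D (VL b) w) * (\<epsilon> - D (VL a) w))"
        by (intro ispoly_mult ispoly_prod ispoly_diff ispoly_const finB Dpoly)
      then show ?thesis by (simp add: Fe_def[abs_def])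
    qed
    have Pnn: "0 \<le> (\<Prod>b\<in>B. D (VL b) w)" for w by (simp add: prod_nonneg Dnn)
    have Fnn: "0 \<le> Fe (VL b)" if bT: "b \<in> T" for b
    proof (cases "b \<in> B")
      case True
      have "(\<Prod>b'\<in>B. D (VL b') (VL b)) = 0"
        by (rule prod_zero[OF finB], rule bexI[of _ b]) (simp_all add: D_def True)
      then show ?thesis by (simp add: Fe_def)
    next
      case False
      then have "D (VL b) (VL a) = 0" using bT by (simp add: B_def)
      then have "VL a j = VL b j" if "j \<le> i" for j using Dzero that by blast
      then have "D (VL a) (VL b) = 0" unfolding D_def by (intro sum.neutral) auto
      then show ?thesis using Pnn[of "VL b"] eps by (simp add: Fe_def)
    qed
    have Fa: "0 < Fe (VL a)"
    proof -
      have "0 < (\<Prod>b\<in>B. D (VL b) (VL a))"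
      proof (rule prod_pos)
        fix b assume "b \<in> B"
        then have "D (VL b) (VL a) \<noteq> 0" by (simp add: B_def)
        then show "0 < D (VL b) (VL a)" using Dnn[of "VL b" "VL a"] by linarith
      qed
      moreover have "D (VL a) (VL a) = 0" by (simp add: D_def)
      ultimately show ?thesis using eps by (simp add: Fe_def)
    qed
    have spos: "0 < (\<Sum>b\<in>T. Fe (VL b))"
    proof -
      have "Fe (VL a) \<le> (\<Sum>b\<in>T. Fe (VL b))" by (rule member_le_sum[OF aT]) (use Fnn finT in auto)
      then show ?thesis using Fa by simp
    qed
    have ev: "eventually (\<lambda>n. 0 < (\<Sum>y\<in>S n. Fe (W n y))) sequentially"
      by (rule order_tendstoD(1)[OF conv[OF Fpoly] spos])
    show ?thesis
    proof (rule eventually_mono[OF ev])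
      fix n assume pos: "0 < (\<Sum>y\<in>S n. Fe (W n y))"
      obtain y where y: "y \<in> S n" "0 < Fe (W n y)"
      proof (rule ccontr)
        assume "\<not> thesis"
        then have "\<forall>y\<in>S n. Fe (W n y) \<le> 0" using that by force
        then have "(\<Sum>y\<in>S n. Fe (W n y)) \<le> 0" by (simp add: sum_nonpos)
        then show False using pos by simp
      qed
      have "D (VL a) (W n y) < \<epsilon>"
      proof (rule ccontr)
        assume "\<not> D (VL a) (W n y) < \<epsilon>"
        then have "\<epsilon> - D (VL a) (W n y) \<le> 0" by simp
        then have "Fe (W n y) \<le> 0" unfolding Fe_def using Pnn by (rule mult_nonneg_nonpos[rotated])
        then show False using y by simp
      qed
      then show "g n (r n) < \<epsilon>" using r[of n] y(1) by (force simp: g_def)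
    qed
  qed
  have gto: "(\<lambda>n. g n (r n)) \<longlonglongrightarrow> 0"
  proof (rule order_tendstoI)
    fix e :: real assume "e < 0"
    then show "eventually (\<lambda>n. e < g n (r n)) sequentially"
      using Dnn by (simp add: g_def less_le_trans)
  next
    fix e :: real assume "0 < e"
    then show "eventually (\<lambda>n. g n (r n) < e) sequentially" by (rule small)
  qed
  have "(\<lambda>n. W n (r n) j) \<longlonglongrightarrow> VL a j" if j: "j \<le> i" for j
  proof -
    have sq: "(\<lambda>n. (W n (r n) j - VL a j)^2) \<longlonglongrightarrow> 0"
    proof (rule tendsto_sandwich[of "\<lambda>_. 0" _ _ "\<lambda>n. g n (r n)"])
      show "eventually (\<lambda>n. 0 \<le> (W n (r n) j - VL a j)^2) sequentially" by simp
      show "eventually (\<lambda>n. (W n (r n) j - VL a j)^2 \<le> g n (r n)) sequentially"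
        using coord[OF j] by (simp add: g_def)
    qed (simp_all add: gto)
    have "(\<lambda>n. sqrt ((W n (r n) j - VL a j)^2)) \<longlonglongrightarrow> sqrt 0"
      by (rule tendsto_real_sqrt[OF sq])
    then have "(\<lambda>n. \<bar>W n (r n) j - VL a j\<bar>) \<longlonglongrightarrow> 0" by simp
    then have "(\<lambda>n. W n (r n) j - VL a j) \<longlonglongrightarrow> 0" by (simp add: tendsto_rabs_zero_iff)
    then show ?thesis by (rule LIM_zero_cancel)
  qed
  then show ?thesis using r by blast
qed



lemma poly_conv:
  assumes fin: "\<And>n. finite (V n)" and lim: "modeling_limit V E M F"
    and xi: "fv xi = {x0}" "graph_fm xi" and xi_fin: "finite (def_set (space M) F xi)"
    and xi_card: "\<And>n. card (def_set (V n) (E n) xi) = card (def_set (space M) F xi)"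
  shows "(\<lambda>n. \<Sum>r\<in>def_set (V n) (E n) xi. peval ps (\<lambda>j. stone (V n) (E n) r (\<phi> j)))
     \<longlonglongrightarrow> (\<Sum>b\<in>def_set (space M) F xi. peval ps (\<lambda>j. stone_mod M F b (\<phi> j)))"
proof (induction ps)
  case Nil then show ?case by simp
next
  case (Cons p ps)
  obtain c js where p: "p = (c, js)" by (cases p)
  have mod: "modeling M F" using lim by (simp add: modeling_limit_def)
  have mono: "(\<lambda>n. \<Sum>r\<in>def_set (V n) (E n) xi. prod_list (map (\<lambda>j. stone (V n) (E n) r (\<phi> j)) js))
     \<longlonglongrightarrow> (\<Sum>b\<in>def_set (space M) F xi. prod_list (map (\<lambda>j. stone_mod M F b (\<phi> j)) js))"
    using claimB[OF fin lim xi xi_fin xi_card, of "cl (map \<phi> js)"]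
    by (simp add: stone_cl stone_mod_cl[OF mod] comp_def)
  have "(\<lambda>n. c * (\<Sum>r\<in>def_set (V n) (E n) xi. prod_list (map (\<lambda>j. stone (V n) (E n) r (\<phi> j)) js))
        + (\<Sum>r\<in>def_set (V n) (E n) xi. peval ps (\<lambda>j. stone (V n) (E n) r (\<phi> j))))
     \<longlonglongrightarrow> c * (\<Sum>b\<in>def_set (space M) F xi. prod_list (map (\<lambda>j. stone_mod M F b (\<phi> j)) js))
        + (\<Sum>b\<in>def_set (space M) F xi. peval ps (\<lambda>j. stone_mod M F b (\<phi> j)))"
    by (intro tendsto_add tendsto_mult_left mono Cons.IH)
  then show ?case by (simp add: p sum.distrib sum_distrib_left)
qed

theorem lemma5:
  fixes V :: "nat \<Rightarrow> 'a set" and E :: "nat \<Rightarrow> 'a \<Rightarrow> 'a \<Rightarrow> bool"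
    and M :: "'v::polish_space measure" and F :: "'v \<Rightarrow> 'v \<Rightarrow> bool"
    and xi :: fm and \<phi> :: "nat \<Rightarrow> fm"
  assumes fin: "\<And>n. finite (V n)" and ne: "\<And>n. V n \<noteq> {}"
    and conv: "FO_convergent V E"
    and lim: "modeling_limit V E M F"
    and xi_fm: "graph_fm xi" "card (fv xi) = 1"
    and xi_fin: "finite (def_set (space M) F xi)" and xi_ne: "def_set (space M) F xi \<noteq> {}"
    and xi_min: "\<And>chi. graph_fm chi \<Longrightarrow> card (fv chi) = 1 \<Longrightarrow>
        \<not> (def_set (space M) F chi \<noteq> {} \<and> def_set (space M) F chi \<subset> def_set (space M) F xi)"
    and xi_card: "\<And>n. card (def_set (V n) (E n) xi) = card (def_set (space M) F xi)"
    and enum: "surj \<phi>"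
  shows "\<exists>(r :: nat \<Rightarrow> nat \<Rightarrow> 'a) (rL :: nat \<Rightarrow> 'v). \<forall>i.
      (\<forall>n. r i n \<in> def_set (V n) (E n) xi) \<and> rL i \<in> def_set (space M) F xi \<and>
      (\<forall>j\<le>i. (\<lambda>n. stone (V n) (E n) (r i n) (\<phi> j)) \<longlonglongrightarrow> stone_mod M F (rL i) (\<phi> j)) \<and>
      (\<forall>j\<le>i. \<forall>i'\<ge>i. stone_mod M F (rL i) (\<phi> j) = stone_mod M F (rL i') (\<phi> j))"
proof -
  obtain x0 where x0: "fv xi = {x0}" using xi_fm(2) by (rule card_1_singletonE)
  define XL where "XL = def_set (space M) F xi"
  obtain a where aX: "a \<in> XL" using xi_ne unfolding XL_def by blast
  define S where "S n = def_set (V n) (E n) xi" for n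
  have finS: "finite (S n)" for n using fin[of n] by (simp add: S_def def_set_def)
  have neS: "S n \<noteq> {}" for n
  proof
    assume "S n = {}"
    then have "card XL = 0" using xi_card[of n] by (simp add: S_def XL_def)
    then show False using xi_fin xi_ne by (simp add: XL_def)
  qed
  have conv: "(\<lambda>n. \<Sum>r\<in>S n. f (\<lambda>j. stone (V n) (E n) r (\<phi> j))) \<longlonglongrightarrow> (\<Sum>b\<in>XL. f (\<lambda>j. stone_mod M F b (\<phi> j)))"
    if fp: "ispoly f" for f
  proof -
    obtain ps where ps: "\<And>w. f w = peval ps w" using fp unfolding ispoly_def by blast
    show ?thesis unfolding ps S_def XL_def
      by (rule poly_conv[OF fin lim x0 xi_fm(1) xi_fin xi_card])
  qed
  have "\<forall>i. \<exists>r. (\<forall>n. r n \<in> S n) \<and> (\<forall>j\<le>i. (\<lambda>n. stone (V n) (E n) (r n) (\<phi> j)) \<longlonglongrightarrow> stone_mod M F a (\<phi> j))"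
  proof
    fix i
    show "\<exists>r. (\<forall>n. r n \<in> S n) \<and> (\<forall>j\<le>i. (\<lambda>n. stone (V n) (E n) (r n) (\<phi> j)) \<longlonglongrightarrow> stone_mod M F a (\<phi> j))"
      using abstract_approx[of S XL a "\<lambda>n r j. stone (V n) (E n) r (\<phi> j)" "\<lambda>b j. stone_mod M F b (\<phi> j)" i]
        finS neS xi_fin aX conv unfolding XL_def by blast
  qed
  then obtain R where R: "\<And>i. (\<forall>n. R i n \<in> S n) \<and> (\<forall>j\<le>i. (\<lambda>n. stone (V n) (E n) (R i n) (\<phi> j)) \<longlonglongrightarrow> stone_mod M F a (\<phi> j))"
    by metis
  show ?thesis
    by (rule exI[of _ R], rule exI[of _ "\<lambda>_. a"]) (use R aX in \<open>simp add: S_def XL_def\<close>)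
qed

end
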